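(* Let $P(t,q)=\log\big(\sum_{n=1}^\infty2^{-nt}n^q\big)$ on $D=\{(t,q): t>0,\ \text{or}\ t=0,\ q<-1\}$, let $\tilde D=\{(t,q)\in D:0\le t\le1\}$, and let $\xi_0=\int_0^1\log\lceil-\log_2x\rceil\,dx$. For $\xi>0$ let $(t(\xi),q(\xi))\in\tilde D$ be the unique solution in $\tilde D$ of the system $P(t,q)=q\xi$, $\frac{\partial P}{\partial q}(t,q)=\xi$. Then $q(\xi)<0$ for $0<\xi<\xi_0$, $q(\xi_0)=0$, and $q(\xi)>0$ for $\xi>\xi_0$.
   Context: It is part of the setting (taken from the paper) that for every $\xi>0$ the system has a unique solution in $\tilde D$, that this solution is $(1,0)$ for $\xi=\xi_0$, and that $\frac{\partial P}{\partial q}(1,0)=\xi_0$. *)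

theory Defs
  imports "HOL-Analysis.Analysis"
begin

definition Pfun :: "real \<Rightarrow> real \<Rightarrow> real" where
  "Pfun t q = ln (\<Sum>n. 2 powr (- real (Suc n) * t) * real (Suc n) powr q)"

definition dPdq :: "real \<Rightarrow> real \<Rightarrow> real" where
  "dPdq t q = deriv (\<lambda>s. Pfun t s) q"

definition Dom :: "(real \<times> real) set" where
  "Dom = {(t, q). t > 0 \<or> (t = 0 \<and> q < -1)}"

definition Dtilde :: "(real \<times> real) set" where
  "Dtilde = {(t, q). (t, q) \<in> Dom \<and> 0 \<le> t \<and> t \<le> 1}"

definition xi0 :: real where
  "xi0 = integral {0..1} (\<lambda>x. ln (real_of_int (ceiling (- log 2 x))))"

definition solves :: "real \<Rightarrow> real \<times> real \<Rightarrow> bool" where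
  "solves \<xi> p \<longleftrightarrow> p \<in> Dtilde \<and> Pfun (fst p) (snd p) = snd p * \<xi> \<and> dPdq (fst p) (snd p) = \<xi>"

definition tq :: "real \<Rightarrow> real \<times> real" where
  "tq \<xi> = (THE p. solves \<xi> p)"

definition qsol :: "real \<Rightarrow> real" where
  "qsol \<xi> = snd (tq \<xi>)"

end

theory Submission imports Defs "HOL-Real_Asymp.Real_Asymp" "HOL-Library.Landau_Symbols" begin

lemma summ_pos_t:
  assumes t: "t > 0"
  shows "summable (\<lambda>n. 2 powr (- real (Suc n) * t) * real (Suc n) powr q)"
proof (rule summable_comparison_test_bigo)
  show "summable (\<lambda>n. norm (real n powr (-2)))"
    using summable_real_powr_iff[of "-2"] by simp
  show "(\<lambda>n. 2 powr (- real (Suc n) * t) * real (Suc n) powr q) \<in> O(\<lambda>n. real n powr (-2))"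
    using t by real_asymp
qed

lemma summ_sq: "summable (\<lambda>n. (1/2::real)^(Suc n) * (real (Suc n) * real (Suc n)))"
proof (rule summable_comparison_test_bigo)
  show "summable (\<lambda>n. norm (real n powr (-2)))"
    using summable_real_powr_iff[of "-2"] by simp
  show "(\<lambda>n. (1/2::real)^(Suc n) * (real (Suc n) * real (Suc n))) \<in> O(\<lambda>n. real n powr (-2))"
    by real_asymp
qed

lemma summ_dom:
  assumes "(t, q) \<in> Dom"
  shows "summable (\<lambda>n. 2 powr (- real (Suc n) * t) * real (Suc n) powr q)"
proof (cases "t > 0")
  case True then show ?thesis by (rule summ_pos_t)
next
  case False
  then have t: "t = 0" and q: "q < -1" using assms by (auto simp: Dom_def)
  have "summable (\<lambda>n. real n powr q)" using summable_real_powr_iff q by blast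
  then have "summable (\<lambda>n. real (Suc n) powr q)"
    using summable_Suc_iff[of "\<lambda>n. real n powr q"] by simp
  then show ?thesis using t by simp
qed

lemma S_pos:
  assumes "(t, q) \<in> Dom"
  shows "0 < (\<Sum>n. 2 powr (- real (Suc n) * t) * real (Suc n) powr q)"
  by (rule suminf_pos[OF summ_dom[OF assms]]) simp

lemma P_mono:
  assumes "(t, q) \<in> Dom" "t \<le> 1"
  shows "Pfun 1 q \<le> Pfun t q"
proof -
  have d1: "(1, q) \<in> Dom" by (simp add: Dom_def)
  have "(\<Sum>n. 2 powr (- real (Suc n) * 1) * real (Suc n) powr q)
     \<le> (\<Sum>n. 2 powr (- real (Suc n) * t) * real (Suc n) powr q)"
  proof (rule suminf_le)
    fix n
    have "- real (Suc n) * 1 \<le> - real (Suc n) * t" using assms(2) by simp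
    then have "2 powr (- real (Suc n) * 1) \<le> 2 powr (- real (Suc n) * t)"
      by (intro powr_mono) auto
    then show "2 powr (- real (Suc n) * 1) * real (Suc n) powr q
          \<le> 2 powr (- real (Suc n) * t) * real (Suc n) powr q"
      by (intro mult_right_mono) auto
  qed (use summ_dom[OF d1] summ_dom[OF assms(1)] in auto)
  then show ?thesis unfolding Pfun_def
    using S_pos[OF d1] by (intro ln_mono) auto
qed

lemma w_eq: "2 powr (- real (Suc n)) = (1/2::real)^Suc n"
  by (simp add: powr_minus powr_realpow power_one_over inverse_eq_divide del: of_nat_Suc)

lemma half_sums: "(\<lambda>n. (1/2::real)^Suc n) sums 1"
proof -
  have "(\<lambda>n. (1/2::real)^n) sums (1 / (1 - 1/2))" by (rule geometric_sums) simp
  then have "(\<lambda>n. (1/2) * (1/2::real)^n) sums ((1/2) * (1 / (1 - 1/2)))" by (rule sums_mult)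
  then show ?thesis by simp
qed

lemma Pfun1_eq: "Pfun 1 q = ln (\<Sum>n. (1/2::real)^Suc n * real (Suc n) powr q)"
  unfolding Pfun_def by (simp only: mult_1_right w_eq)

lemma ln_le_sq: "ln (real (Suc n)) \<le> real (Suc n) * real (Suc n)"
proof -
  have "ln (real (Suc n)) \<le> real (Suc n) - 1" by (rule ln_le_minus_one) simp
  also have "\<dots> \<le> real (Suc n) * real (Suc n)" by (simp add: algebra_simps)
  finally show ?thesis .
qed

definition cc :: real where "cc = (\<Sum>n. (1/2::real)^Suc n * ln (real (Suc n)))"

lemma summ_c: "summable (\<lambda>n. (1/2::real)^Suc n * ln (real (Suc n)))"
proof (rule summable_comparison_test'[OF summ_sq])
  fix n :: nat
  show "norm ((1/2::real)^Suc n * ln (real (Suc n))) \<le> (1/2::real)^(Suc n) * (real (Suc n) * real (Suc n))"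
    using ln_le_sq[of n] by (simp del: of_nat_Suc)
qed

lemma jensen: "q * cc \<le> Pfun 1 q"
proof -
  define x where "x n = real (Suc n) powr q" for n
  define m where "m = (\<Sum>n. (1/2::real)^Suc n * x n)"
  have d1: "(1, q) \<in> Dom" by (simp add: Dom_def)
  have sa: "(\<lambda>n. (1/2::real)^Suc n * x n) sums m"
    using summ_dom[OF d1] w_eq unfolding m_def x_def
    by (simp add: summable_sums del: of_nat_Suc)
  have mpos: "m > 0" using S_pos[OF d1] w_eq unfolding m_def x_def by (simp del: of_nat_Suc)
  have Pm: "Pfun 1 q = ln m" unfolding Pfun1_eq m_def x_def ..
  have xpos: "x n > 0" for n unfolding x_def by simp
  have lx: "ln (x n) = q * ln (real (Suc n))" for n unfolding x_def by (simp add: ln_powr del: of_nat_Suc)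
  have tm: "(1/2::real)^Suc n * (q * ln (real (Suc n)))
      \<le> (1/2::real)^Suc n * (ln m - 1) + (1/m) * ((1/2::real)^Suc n * x n)" for n
  proof -
    have "ln (x n / m) \<le> x n / m - 1" by (rule ln_le_minus_one) (use xpos mpos in simp)
    then have "q * ln (real (Suc n)) \<le> ln m - 1 + x n / m"
      using ln_div[of "x n" m] xpos[of n] mpos lx by simp
    then have "(1/2::real)^Suc n * (q * ln (real (Suc n))) \<le> (1/2::real)^Suc n * (ln m - 1 + x n / m)"
      by (intro mult_left_mono) auto
    moreover have "(1/2::real)^Suc n * (ln m - 1 + x n / m) = (1/2::real)^Suc n * (ln m - 1) + (1/m) * ((1/2::real)^Suc n * x n)"
      using mpos by (simp add: field_simps)
    ultimately show ?thesis by linarith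
  qed
  have s1: "(\<lambda>n. (1/2::real)^Suc n * (q * ln (real (Suc n)))) sums (q * cc)"
    using sums_mult[OF summable_sums[OF summ_c], of q] unfolding cc_def
    by (simp add: algebra_simps)
  have s2: "(\<lambda>n. (1/2::real)^Suc n * (ln m - 1) + (1/m) * ((1/2::real)^Suc n * x n)) sums ((ln m - 1) + (1/m) * m)"
    by (intro sums_add sums_mult sa) (use sums_mult2[OF half_sums, of "ln m - 1"] in simp)
  have "q * cc \<le> (ln m - 1) + (1/m) * m" by (rule sums_le[OF tm s1 s2])
  then show ?thesis using Pm mpos by simp
qed


lemma cc_pos: "cc > 0"
  unfolding cc_def by (rule suminf_pos2[OF summ_c, of 1]) auto

lemma S1_deriv: "((\<lambda>q. \<Sum>n. (1/2::real)^Suc n * real (Suc n) powr q) has_field_derivative cc) (at 0)"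
proof -
  define S where "S = {-1<..<(1::real)}"
  have "((\<lambda>q. \<Sum>n. (1/2::real)^Suc n * real (Suc n) powr q) has_field_derivative
         (\<Sum>n. (1/2::real)^Suc n * (ln (real (Suc n)) * real (Suc n) powr 0))) (at 0)"
  proof (rule has_field_derivative_series'(2)[where S=S and x0=0])
    show "convex S" unfolding S_def by simp
    show "((\<lambda>q. (1/2::real)^Suc n * real (Suc n) powr q) has_field_derivative
            (1/2::real)^Suc n * (ln (real (Suc n)) * real (Suc n) powr x)) (at x within S)" for n x
    proof -
      have "((\<lambda>q. real (Suc n) powr q) has_real_derivative real (Suc n) powr x * (1 * ln (real (Suc n)) + 0 * x / real (Suc n))) (at x)"
        by (rule DERIV_powr[OF DERIV_const _ DERIV_ident]) simp
      then have "((\<lambda>q. (1/2::real)^Suc n * real (Suc n) powr q) has_real_derivative (1/2::real)^Suc n * (real (Suc n) powr x * (1 * ln (real (Suc n)) + 0 * x / real (Suc n)))) (at x)"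
        by (rule DERIV_cmult)
      then have "((\<lambda>q. (1/2::real)^Suc n * real (Suc n) powr q) has_real_derivative (1/2::real)^Suc n * (real (Suc n) powr x * (1 * ln (real (Suc n)) + 0 * x / real (Suc n)))) (at x within S)"
        by (rule has_field_derivative_at_within)
      then show ?thesis by (simp only: mult_1 mult_zero_left div_0 add_0_right mult.commute)
    qed
    show "uniformly_convergent_on S (\<lambda>n x. \<Sum>i<n. (1/2::real)^Suc i * (ln (real (Suc i)) * real (Suc i) powr x))"
    proof (rule Weierstrass_m_test'[OF _ summ_sq])
      fix n x assume x: "x \<in> S"
      have "real (Suc n) powr x \<le> real (Suc n) powr 1"
        using x unfolding S_def by (intro powr_mono) auto
      then have p: "real (Suc n) powr x \<le> real (Suc n)" by simp
      have "ln (real (Suc n)) * real (Suc n) powr x \<le> real (Suc n) * real (Suc n)"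
      proof (rule mult_mono[OF _ p])
        have "ln (real (Suc n)) \<le> real (Suc n) - 1" by (rule ln_le_minus_one) simp
        then show "ln (real (Suc n)) \<le> real (Suc n)" by linarith
      qed simp_all
      moreover have "ln (real (Suc n)) * real (Suc n) powr x \<ge> 0" by simp
      ultimately show "norm ((1/2::real)^Suc n * (ln (real (Suc n)) * real (Suc n) powr x))
                       \<le> (1/2::real)^Suc n * (real (Suc n) * real (Suc n))"
        by (simp del: of_nat_Suc)
    qed
    show "(0::real) \<in> S" unfolding S_def by simp
    show "summable (\<lambda>n. (1/2::real)^Suc n * real (Suc n) powr 0)"
      using sums_summable[OF half_sums] by simp
    show "(0::real) \<in> interior S" unfolding S_def by simp
  qed
  then show ?thesis unfolding cc_def by simp
qed

lemma dPdq10: "dPdq 1 0 = cc"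
proof -
  define S where "S = (\<lambda>q. \<Sum>n. (1/2::real)^Suc n * real (Suc n) powr q)"
  have S0: "S 0 = 1"
    using half_sums unfolding S_def by (simp add: sums_iff)
  have dS: "(S has_field_derivative cc) (at 0)" unfolding S_def by (rule S1_deriv)
  have "((\<lambda>q. ln (S q)) has_field_derivative (inverse (S 0) * cc)) (at 0)"
    by (rule DERIV_chain2[OF DERIV_ln dS]) (simp add: S0)
  then have d: "((\<lambda>q. ln (S q)) has_field_derivative cc) (at 0)" by (simp only: S0 inverse_1 mult_1)
  have eq: "(\<lambda>s. Pfun 1 s) = (\<lambda>q. ln (S q))" unfolding S_def by (rule ext) (rule Pfun1_eq)
  show ?thesis unfolding dPdq_def eq by (rule DERIV_imp_deriv[OF d])
qed

lemma P_zero: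
  assumes t: "t > 0" and P: "Pfun t 0 = 0"
  shows "t = 1"
proof -
  define r where "r = 2 powr (- t)"
  have r0: "0 < r" unfolding r_def by simp
  have "2 powr (-t) < 2 powr 0" using t by (intro powr_less_mono) auto
  then have r1: "r < 1" unfolding r_def by simp
  have eq: "2 powr (- real (Suc n) * t) * real (Suc n) powr 0 = r * r ^ n" for n
  proof -
    have "2 powr (- real (Suc n) * t) = (2 powr (-t)) powr real (Suc n)"
      by (simp add: powr_powr algebra_simps)
    also have "\<dots> = r ^ Suc n" unfolding r_def by (rule powr_realpow) simp
    finally show ?thesis by simp
  qed
  have "(\<lambda>n. r * r ^ n) sums (r * (1 / (1 - r)))"
    by (rule sums_mult, rule geometric_sums) (use r0 r1 in simp)
  then have Ssum: "(\<Sum>n. 2 powr (- real (Suc n) * t) * real (Suc n) powr 0) = r * (1 / (1 - r))"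
    unfolding eq by (simp only: sums_iff)
  have "Pfun t 0 = ln (r * (1 / (1 - r)))" unfolding Pfun_def Ssum ..
  with P have l0: "ln (r * (1 / (1 - r))) = 0" by simp
  have "r * (1 / (1 - r)) > 0" using r0 r1 by simp
  with l0 have "r * (1 / (1 - r)) = 1" by simp
  then have "r = 1 - r" using r1 by (simp add: divide_eq_eq)
  then have "2 powr (-t) = 2 powr (-1)" unfolding r_def by (simp add: powr_neg_one)
  then show ?thesis using powr_inj[of 2 "-t" "-1"] by simp
qed

lemma core:
  assumes s: "solves \<xi> (t, q)"
  shows "(q > 0 \<longrightarrow> \<xi> \<ge> cc) \<and> (q < 0 \<longrightarrow> \<xi> \<le> cc) \<and> (q = 0 \<longrightarrow> \<xi> = cc)"
proof -
  have D: "(t, q) \<in> Dom" and t1: "t \<le> 1" and P: "Pfun t q = q * \<xi>" and dP: "dPdq t q = \<xi>"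
    using s by (auto simp: solves_def Dtilde_def)
  have ineq: "q * cc \<le> q * \<xi>" using jensen[of q] P_mono[OF D t1] P by linarith
  have "q > 0 \<longrightarrow> \<xi> \<ge> cc" using ineq by (simp add: mult_le_cancel_left)
  moreover have "q < 0 \<longrightarrow> \<xi> \<le> cc" using ineq by (simp add: mult_le_cancel_left)
  moreover have "q = 0 \<longrightarrow> \<xi> = cc"
  proof
    assume q: "q = 0"
    then have "t > 0" using D by (auto simp: Dom_def)
    moreover have "Pfun t 0 = 0" using P q by simp
    ultimately have "t = 1" by (rule P_zero)
    then show "\<xi> = cc" using dP q dPdq10 by simp
  qed
  ultimately show ?thesis by blast
qed

theorem proposition4p5:
  assumes unique: "\<forall>\<xi>>0. \<exists>!p. solves \<xi> p"
    and at_xi0: "tq xi0 = (1, 0)"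
    and deriv10: "dPdq 1 0 = xi0"
  shows "(\<forall>\<xi>. 0 < \<xi> \<and> \<xi> < xi0 \<longrightarrow> qsol \<xi> < 0)
       \<and> qsol xi0 = 0
       \<and> (\<forall>\<xi>. \<xi> > xi0 \<longrightarrow> qsol \<xi> > 0)"
proof -
  have xc: "xi0 = cc" using deriv10 dPdq10 by simp
  have sol: "solves \<xi> (fst (tq \<xi>), qsol \<xi>)" if "\<xi> > 0" for \<xi>
  proof -
    have "solves \<xi> (tq \<xi>)" unfolding tq_def using unique that by (metis theI')
    then show ?thesis unfolding qsol_def by simp
  qed
  have A: "qsol \<xi> < 0" if "0 < \<xi>" "\<xi> < xi0" for \<xi>
  proof -
    note c = core[OF sol[OF that(1)]]
    show ?thesis
    proof (rule ccontr)
      assume "\<not> qsol \<xi> < 0"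
      then have "qsol \<xi> = 0 \<or> qsol \<xi> > 0" by linarith
      then show False using c that xc by auto
    qed
  qed
  have B: "qsol \<xi> > 0" if "\<xi> > xi0" for \<xi>
  proof -
    have "\<xi> > 0" using that xc cc_pos by simp
    show ?thesis
    proof (rule ccontr)
      note c = core[OF sol[OF \<open>\<xi> > 0\<close>]]
      assume "\<not> qsol \<xi> > 0"
      then have "qsol \<xi> = 0 \<or> qsol \<xi> < 0" by linarith
      then show False using c that xc by auto
    qed
  qed
  have C: "qsol xi0 = 0" unfolding qsol_def using at_xi0 by simp
  show ?thesis using A B C by blast
qed

end
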